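(* Let $\Omega\subset\mathbb{R}^2$ be a box such that $\overline{\Omega}=\bigcup_i\overline{\Omega_i}$ for at most countably many mutually disjoint boxes $\Omega_i\subset\mathbb{R}^2$, all with endpoints on the grid for the mesh size vector $h=(h_1,h_2)$. Then for every $u:\overline{\Omega}_h\to\mathbb{R}$ and $1\le p<\infty$, $$\|u\|^p_{L^p(\Omega_h)}\le\sum_i\|u\|^p_{L^p(\Omega_{i,h})}\le4\|u\|^p_{L^p(\Omega_h)},\qquad \|u\|^2_{D(\Omega_h)}\le\sum_i\|u\|^2_{D(\Omega_{i,h})}\le2\|u\|^2_{D(\Omega_h)}.$$
   Context: For a box $B=(a_1,b_1)\times(a_2,b_2)$ with $a_j=k_jh_j$, $b_j=l_jh_j$, $k_j,l_j\in\mathbb{Z}\cup\{\pm\infty\}$, $l_j-k_j>1$: $\mathbb{R}^2_h=\{(h_1z_1,h_2z_2):z_j\in\mathbb{Z}\}$, $\overline{B}_h=\overline{B}\cap\mathbb{R}^2_h$, $\partial B_h=\partial B\cap\mathbb{R}^2_h$, $\partial_j^+B_h=\partial B_h\cap\{x_j=b_j\}$, $\mathbf{h}=h_1h_2$, $D_j^+u(x)=(u(x+h_je_j)-u(x))/h_j$. Norms: $\|u\|^p_{L^p(B_h)}=\sum_{x\in\overline{B}_h}|u(x)|^p\mathbf{h}$, $\|u\|^2_{D(B_h)}=\sum_{j=1}^2\sum_{x\in\overline{B}_h\setminus\partial_j^+B_h}|D_j^+u(x)|^2\mathbf{h}$. $\Omega_{i,h}$ denotes the discretization of $\Omega_i$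 in this sense. *)

theory Defs
  imports "HOL-Analysis.Analysis" "HOL-Library.Extended_Real"
begin

text \<open>A box is given by its (extended real) endpoints (a1, b1, a2, b2):
  B = (a1,b1) x (a2,b2).\<close>
type_synonym ebox = "ereal \<times> ereal \<times> ereal \<times> ereal"

definition box_set :: "ebox \<Rightarrow> (real \<times> real) set" where
  "box_set B = (case B of (a1, b1, a2, b2) \<Rightarrow>
     {x. a1 < ereal (fst x) \<and> ereal (fst x) < b1 \<and> a2 < ereal (snd x) \<and> ereal (snd x) < b2})"

definition on_grid_pt :: "real \<Rightarrow> ereal \<Rightarrow> bool" where
  "on_grid_pt h a = (a = \<infinity> \<or> a = -\<infinity> \<or> (\<exists>k::int. a = ereal (of_int k * h)))"

definition grid_box :: "real \<Rightarrow> real \<Rightarrow> ebox \<Rightarrow> bool" where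
  "grid_box h1 h2 B = (case B of (a1, b1, a2, b2) \<Rightarrow>
     on_grid_pt h1 a1 \<and> on_grid_pt h1 b1 \<and> on_grid_pt h2 a2 \<and> on_grid_pt h2 b2 \<and>
     a1 \<noteq> \<infinity> \<and> b1 \<noteq> -\<infinity> \<and> a2 \<noteq> \<infinity> \<and> b2 \<noteq> -\<infinity> \<and>
     b1 - a1 > ereal h1 \<and> b2 - a2 > ereal h2)"

definition grid :: "real \<Rightarrow> real \<Rightarrow> (real \<times> real) set" where
  "grid h1 h2 = {(h1 * of_int z1, h2 * of_int z2) | z1 z2. True}"

definition clos_h :: "real \<Rightarrow> real \<Rightarrow> ebox \<Rightarrow> (real \<times> real) set" where
  "clos_h h1 h2 B = closure (box_set B) \<inter> grid h1 h2"

definition bdry_h :: "real \<Rightarrow> real \<Rightarrow> ebox \<Rightarrow> (real \<times> real) set" where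
  "bdry_h h1 h2 B = frontier (box_set B) \<inter> grid h1 h2"

definition bdry1_plus :: "real \<Rightarrow> real \<Rightarrow> ebox \<Rightarrow> (real \<times> real) set" where
  "bdry1_plus h1 h2 B = bdry_h h1 h2 B \<inter> {x. ereal (fst x) = fst (snd B)}"

definition bdry2_plus :: "real \<Rightarrow> real \<Rightarrow> ebox \<Rightarrow> (real \<times> real) set" where
  "bdry2_plus h1 h2 B = bdry_h h1 h2 B \<inter> {x. ereal (snd x) = snd (snd (snd B))}"

definition D1plus :: "real \<Rightarrow> (real \<times> real \<Rightarrow> real) \<Rightarrow> real \<times> real \<Rightarrow> real" where
  "D1plus h1 u x = (u (fst x + h1, snd x) - u x) / h1"

definition D2plus :: "real \<Rightarrow> (real \<times> real \<Rightarrow> real) \<Rightarrow> real \<times> real \<Rightarrow> real" where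
  "D2plus h2 u x = (u (fst x, snd x + h2) - u x) / h2"

definition Lp_pow :: "real \<Rightarrow> real \<Rightarrow> real \<Rightarrow> ebox \<Rightarrow> (real \<times> real \<Rightarrow> real) \<Rightarrow> ennreal" where
  "Lp_pow h1 h2 p B u = (\<Sum>\<^sub>\<infinity>x\<in>clos_h h1 h2 B. ennreal (\<bar>u x\<bar> powr p * (h1 * h2)))"

definition D_sq :: "real \<Rightarrow> real \<Rightarrow> ebox \<Rightarrow> (real \<times> real \<Rightarrow> real) \<Rightarrow> ennreal" where
  "D_sq h1 h2 B u =
     (\<Sum>\<^sub>\<infinity>x\<in>clos_h h1 h2 B - bdry1_plus h1 h2 B. ennreal ((D1plus h1 u x)\<^sup>2 * (h1 * h2)))
   + (\<Sum>\<^sub>\<infinity>x\<in>clos_h h1 h2 B - bdry2_plus h1 h2 B. ennreal ((D2plus h2 u x)\<^sup>2 * (h1 * h2)))"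

end

theory Submission
  imports Defs
begin

lemma fin_le_infsum_enn:
  fixes f :: "'a \<Rightarrow> ennreal"
  assumes "finite F" "F \<subseteq> A"
  shows "sum f F \<le> infsum f A"
proof -
  have "infsum f A = (SUP F\<in>{F. finite F \<and> F\<subseteq>A}. sum f F)"
    by (rule nonneg_infsum_complete) simp
  moreover have "sum f F \<le> (SUP F\<in>{F. finite F \<and> F\<subseteq>A}. sum f F)"
    by (rule SUP_upper) (use assms in simp)
  ultimately show ?thesis by simp
qed
lemma infsum_le_enn:
  fixes f :: "'a \<Rightarrow> ennreal"
  assumes "\<And>F. finite F \<Longrightarrow> F \<subseteq> A \<Longrightarrow> sum f F \<le> c"
  shows "infsum f A \<le> c"
proof -
  have "infsum f A = (SUP F\<in>{F. finite F \<and> F\<subseteq>A}. sum f F)"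
    by (rule nonneg_infsum_complete) simp
  then show ?thesis using assms by (auto intro!: SUP_least)
qed

lemma infsum_finsum_enn:
  fixes g :: "'j \<Rightarrow> 'a \<Rightarrow> ennreal"
  assumes "finite J"
  shows "infsum (\<lambda>x. \<Sum>j\<in>J. g j x) S = (\<Sum>j\<in>J. infsum (g j) S)"
  using assms
proof (induction J rule: finite_induct)
  case empty then show ?case by simp
next
  case (insert j J)
  have "infsum (\<lambda>x. g j x + (\<Sum>j\<in>J. g j x)) S = infsum (g j) S + infsum (\<lambda>x. \<Sum>j\<in>J. g j x) S"
    by (rule infsum_add; rule nonneg_summable_on_complete; simp)
  then show ?case using insert by simp
qed

lemma cover_le:
  fixes f :: "'a \<Rightarrow> ennreal"
  assumes "S \<subseteq> (\<Union>i\<in>I. T i)"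
  shows "infsum f S \<le> infsum (\<lambda>i. infsum f (T i)) I"
proof (rule infsum_le_enn)
  fix F assume F: "finite F" "F \<subseteq> S"
  define sel where "sel x = (SOME i. i \<in> I \<and> x \<in> T i)" for x
  have sel: "sel x \<in> I \<and> x \<in> T (sel x)" if "x \<in> S" for x
  proof -
    have "\<exists>i. i \<in> I \<and> x \<in> T i" using assms that by blast
    then show ?thesis unfolding sel_def by (rule someI_ex)
  qed
  have "sum f F = (\<Sum>j\<in>sel ` F. sum f {x\<in>F. sel x = j})"
    using F(1) by (rule sum.image_gen)
  also have "\<dots> \<le> (\<Sum>j\<in>sel ` F. infsum f (T j))"
  proof (rule sum_mono)
    fix j assume "j \<in> sel ` F"
    have "{x\<in>F. sel x = j} \<subseteq> T j"
    proof
      fix x assume "x \<in> {x\<in>F. sel x = j}"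
      then have "x \<in> S" "sel x = j" using F by auto
      then show "x \<in> T j" using sel[of x] by simp
    qed
    then show "sum f {x\<in>F. sel x = j} \<le> infsum f (T j)"
      by (intro fin_le_infsum_enn) (use F in simp_all)
  qed
  also have "\<dots> \<le> infsum (\<lambda>i. infsum f (T i)) I"
  proof (rule fin_le_infsum_enn)
    show "finite (sel ` F)" using F by simp
    show "sel ` F \<subseteq> I" using F sel by blast
  qed
  finally show "sum f F \<le> infsum (\<lambda>i. infsum f (T i)) I" .
qed

lemma mult_le:
  fixes f :: "'a \<Rightarrow> ennreal"
  assumes sub: "\<And>i. i \<in> I \<Longrightarrow> T i \<subseteq> S"
    and fin: "\<And>x. x \<in> S \<Longrightarrow> finite {i\<in>I. x \<in> T i} \<and> card {i\<in>I. x \<in> T i} \<le> N"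
  shows "infsum (\<lambda>i. infsum f (T i)) I \<le> of_nat N * infsum f S"
proof (rule infsum_le_enn)
  fix J assume J: "finite J" "J \<subseteq> I"
  have "(\<Sum>j\<in>J. infsum f (T j)) = (\<Sum>j\<in>J. infsum (\<lambda>x. if x \<in> T j then f x else 0) S)"
  proof (rule sum.cong)
    fix j assume "j \<in> J"
    then have "T j \<subseteq> S" using J sub by blast
    then show "infsum f (T j) = infsum (\<lambda>x. if x \<in> T j then f x else 0) S"
      by (intro infsum_cong_neutral) auto
  qed simp
  also have "\<dots> = infsum (\<lambda>x. \<Sum>j\<in>J. if x \<in> T j then f x else 0) S"
    by (rule infsum_finsum_enn[symmetric]) (rule J)
  also have "\<dots> \<le> infsum (\<lambda>x. \<Sum>k<N. f x) S"
  proof (rule infsum_mono)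
    fix x assume x: "x \<in> S"
    have "(\<Sum>j\<in>J. if x \<in> T j then f x else 0) = (\<Sum>j\<in>{j\<in>J. x \<in> T j}. f x)"
      using J by (simp add: sum.inter_filter[symmetric])
    also have "\<dots> = of_nat (card {j\<in>J. x \<in> T j}) * f x" by (simp only: sum_constant)
    also have "\<dots> \<le> of_nat N * f x"
    proof (rule mult_right_mono)
      have "card {j\<in>J. x \<in> T j} \<le> card {i\<in>I. x \<in> T i}"
        using fin[OF x] J by (intro card_mono) auto
      then show "of_nat (card {j\<in>J. x \<in> T j}) \<le> (of_nat N :: ennreal)"
        using fin[OF x] by simp
    qed simp
    finally show "(\<Sum>j\<in>J. if x \<in> T j then f x else 0) \<le> (\<Sum>k<N. f x)" by simp
  qed (rule nonneg_summable_on_complete; simp)+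
  also have "\<dots> = of_nat N * infsum f S"
    using infsum_finsum_enn[of "{..<N}" "\<lambda>k. f" S] by simp
  finally show "(\<Sum>j\<in>J. infsum f (T j)) \<le> of_nat N * infsum f S" .
qed



lemma grid_box_lt:
  assumes "h1 > 0" "h2 > 0" "grid_box h1 h2 B"
  shows "fst B < fst (snd B) \<and> fst (snd (snd B)) < snd (snd (snd B))"
proof -
  obtain a1 b1 a2 b2 where B: "B = (a1, b1, a2, b2)" by (cases B) auto
  have g: "a1 \<noteq> \<infinity>" "b1 \<noteq> -\<infinity>" "a2 \<noteq> \<infinity>" "b2 \<noteq> -\<infinity>" "b1 - a1 > ereal h1" "b2 - a2 > ereal h2"
    using assms(3) unfolding B grid_box_def by auto
  have "a1 < b1"
  proof (rule ccontr)
    assume "\<not> a1 < b1"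
    then show False using g(1,2,5) assms(1)
      by (cases a1; cases b1) auto
  qed
  moreover have "a2 < b2"
  proof (rule ccontr)
    assume "\<not> a2 < b2"
    then show False using g(3,4,6) assms(2)
      by (cases a2; cases b2) auto
  qed
  ultimately show ?thesis unfolding B by simp
qed

lemma closure_eint:
  fixes a b :: ereal
  assumes "a < b"
  shows "closure {t::real. a < ereal t \<and> ereal t < b} = {t. a \<le> ereal t \<and> ereal t \<le> b}"
proof (cases a)
  case (real r)
  note ra = real
  show ?thesis
  proof (cases b)
    case (real s)
    then have "r < s" using ra assms by simp
    have "{t::real. a < ereal t \<and> ereal t < b} = {r<..<s}" using ra real by auto
    moreover have "{t. a \<le> ereal t \<and> ereal t \<le> b} = {r..s}" using ra real by auto
    ultimately show ?thesis using \<open>r < s\<close> by simp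
  next
    case PInf
    have "{t::real. a < ereal t \<and> ereal t < b} = {r<..}" using ra PInf by auto
    moreover have "{t. a \<le> ereal t \<and> ereal t \<le> b} = {r..}" using ra PInf by auto
    ultimately show ?thesis by simp
  next
    case MInf then show ?thesis using assms by simp
  qed
next
  case PInf then show ?thesis using assms by simp
next
  case MInf
  note ma = MInf
  show ?thesis
  proof (cases b)
    case (real s)
    have "{t::real. a < ereal t \<and> ereal t < b} = {..<s}" using ma real by auto
    moreover have "{t. a \<le> ereal t \<and> ereal t \<le> b} = {..s}" using ma real by auto
    ultimately show ?thesis by simp
  next
    case PInf
    have "{t::real. a < ereal t \<and> ereal t < b} = UNIV" using ma PInf by auto
    moreover have "{t. a \<le> ereal t \<and> ereal t \<le> b} = UNIV" using ma PInf by auto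
    ultimately show ?thesis by simp
  next
    case MInf then show ?thesis using assms by simp
  qed
qed

definition inC :: "ebox \<Rightarrow> real \<times> real \<Rightarrow> bool" where
  "inC B x = (fst B \<le> ereal (fst x) \<and> ereal (fst x) \<le> fst (snd B) \<and>
     fst (snd (snd B)) \<le> ereal (snd x) \<and> ereal (snd x) \<le> snd (snd (snd B)))"

lemma closure_box:
  assumes "h1 > 0" "h2 > 0" "grid_box h1 h2 B"
  shows "closure (box_set B) = {x. inC B x}"
proof -
  obtain a1 b1 a2 b2 where B: "B = (a1, b1, a2, b2)" by (cases B) auto
  have lt: "a1 < b1" "a2 < b2" using grid_box_lt[OF assms] B by auto
  have "box_set B = {t::real. a1 < ereal t \<and> ereal t < b1} \<times> {t::real. a2 < ereal t \<and> ereal t < b2}"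
    unfolding B box_set_def by auto
  then have "closure (box_set B) = closure {t::real. a1 < ereal t \<and> ereal t < b1} \<times> closure {t::real. a2 < ereal t \<and> ereal t < b2}"
    by (simp add: closure_Times)
  also have "\<dots> = {t. a1 \<le> ereal t \<and> ereal t \<le> b1} \<times> {t. a2 \<le> ereal t \<and> ereal t \<le> b2}"
    using closure_eint[OF lt(1)] closure_eint[OF lt(2)] by simp
  also have "\<dots> = {x. inC B x}" unfolding B inC_def by auto
  finally show ?thesis .
qed

lemma box_set_iff: "x \<in> box_set B \<longleftrightarrow> (fst B < ereal (fst x) \<and> ereal (fst x) < fst (snd B) \<and>
     fst (snd (snd B)) < ereal (snd x) \<and> ereal (snd x) < snd (snd (snd B)))"
  by (cases B) (auto simp: box_set_def)

lemma E1_char: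
  assumes "h1 > 0" "h2 > 0" "grid_box h1 h2 B"
  shows "clos_h h1 h2 B - bdry1_plus h1 h2 B = {x\<in>clos_h h1 h2 B. ereal (fst x) < fst (snd B)}"
proof -
  have cl: "closure (box_set B) = {x. inC B x}" by (rule closure_box[OF assms])
  show ?thesis
  proof (intro set_eqI iffI)
    fix x assume x: "x \<in> clos_h h1 h2 B - bdry1_plus h1 h2 B"
    then have xc: "x \<in> closure (box_set B)" "x \<in> grid h1 h2" unfolding clos_h_def by auto
    have "ereal (fst x) \<noteq> fst (snd B)"
    proof
      assume eq: "ereal (fst x) = fst (snd B)"
      then have "x \<notin> box_set B" by (simp add: box_set_iff)
      then have "x \<notin> interior (box_set B)" using interior_subset by blast
      then have "x \<in> frontier (box_set B)" using xc by (simp add: frontier_def)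
      then have "x \<in> bdry1_plus h1 h2 B" using xc eq unfolding bdry1_plus_def bdry_h_def by simp
      then show False using x by simp
    qed
    moreover have "ereal (fst x) \<le> fst (snd B)" using xc cl by (simp add: inC_def)
    ultimately show "x \<in> {x\<in>clos_h h1 h2 B. ereal (fst x) < fst (snd B)}" using x by auto
  next
    fix x assume "x \<in> {x\<in>clos_h h1 h2 B. ereal (fst x) < fst (snd B)}"
    then show "x \<in> clos_h h1 h2 B - bdry1_plus h1 h2 B" unfolding bdry1_plus_def by auto
  qed
qed

lemma E2_char:
  assumes "h1 > 0" "h2 > 0" "grid_box h1 h2 B"
  shows "clos_h h1 h2 B - bdry2_plus h1 h2 B = {x\<in>clos_h h1 h2 B. ereal (snd x) < snd (snd (snd B))}"
proof -
  have cl: "closure (box_set B) = {x. inC B x}" by (rule closure_box[OF assms])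
  show ?thesis
  proof (intro set_eqI iffI)
    fix x assume x: "x \<in> clos_h h1 h2 B - bdry2_plus h1 h2 B"
    then have xc: "x \<in> closure (box_set B)" "x \<in> grid h1 h2" unfolding clos_h_def by auto
    have "ereal (snd x) \<noteq> snd (snd (snd B))"
    proof
      assume eq: "ereal (snd x) = snd (snd (snd B))"
      then have "x \<notin> box_set B" by (simp add: box_set_iff)
      then have "x \<notin> interior (box_set B)" using interior_subset by blast
      then have "x \<in> frontier (box_set B)" using xc by (simp add: frontier_def)
      then have "x \<in> bdry2_plus h1 h2 B" using xc eq unfolding bdry2_plus_def bdry_h_def by simp
      then show False using x by simp
    qed
    moreover have "ereal (snd x) \<le> snd (snd (snd B))" using xc cl by (simp add: inC_def)
    ultimately show "x \<in> {x\<in>clos_h h1 h2 B. ereal (snd x) < snd (snd (snd B))}" using x by auto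
  next
    fix x assume "x \<in> {x\<in>clos_h h1 h2 B. ereal (snd x) < snd (snd (snd B))}"
    then show "x \<in> clos_h h1 h2 B - bdry2_plus h1 h2 B" unfolding bdry2_plus_def by auto
  qed
qed

lemma common_pt:
  fixes a b a' b' :: ereal
  assumes "a < b" "a \<le> ereal x" "ereal x \<le> b" "a' < b'" "a' \<le> ereal x" "ereal x \<le> b'"
    and "(ereal x < b) = (ereal x < b')"
  shows "\<exists>t. a < ereal t \<and> ereal t < b \<and> a' < ereal t \<and> ereal t < b'"
proof (cases "ereal x < b")
  case True
  then have "ereal x < min b b'" using assms(7) by simp
  then obtain t where t: "ereal x < ereal t" "ereal t < min b b'" using ereal_dense2 by blast
  have "a < ereal t" using assms(2) t(1) by (rule le_less_trans)
  moreover have "a' < ereal t" using assms(5) t(1) by (rule le_less_trans)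
  ultimately show ?thesis using t by (intro exI[of _ t]) auto
next
  case False
  then have "ereal x = b" "ereal x = b'" using assms by auto
  then have "max a a' < ereal x" using assms by auto
  then obtain t where t: "max a a' < ereal t" "ereal t < ereal x" using ereal_dense2 by blast
  then show ?thesis using \<open>ereal x = b\<close> \<open>ereal x = b'\<close> by (intro exI[of _ t]) auto
qed

lemma glem1:
  assumes "h > 0" "on_grid_pt h a" "a \<le> ereal (h * of_int z + h/2)"
  shows "a \<le> ereal (h * of_int z)"
proof -
  consider "a = \<infinity>" | "a = -\<infinity>" | k where "a = ereal (of_int k * h)"
    using assms(2) unfolding on_grid_pt_def by blast
  then show ?thesis
  proof cases
    case 1 then show ?thesis using assms(3) by simp
  next
    case 2 then show ?thesis by simp
  next
    case 3
    then have "h * of_int k \<le> h * (of_int z + 1/2)" using assms(3) by (simp add: algebra_simps)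
    then have "of_int k \<le> (of_int z + 1/2 :: real)" using assms(1) by simp
    then have "k \<le> z" by linarith
    then have "of_int k * h \<le> h * of_int z" using assms(1) by (simp add: mult.commute)
    then show ?thesis using 3 by simp
  qed
qed

lemma glem2:
  assumes "h > 0" "on_grid_pt h b" "ereal (h * of_int z) < b"
  shows "ereal (h * of_int z + h/2) < b"
proof -
  consider "b = \<infinity>" | "b = -\<infinity>" | k where "b = ereal (of_int k * h)"
    using assms(2) unfolding on_grid_pt_def by blast
  then show ?thesis
  proof cases
    case 1 then show ?thesis by simp
  next
    case 2 then show ?thesis using assms(3) by simp
  next
    case 3
    then have "h * of_int z < h * of_int k" using assms(3) by (simp add: mult.commute)
    then have "of_int z < (of_int k :: real)" using assms(1) by simp
    then have "z + 1 \<le> k" by linarith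
    then have "h * (of_int z + 1/2) < h * of_int k" using assms(1) by simp
    then show ?thesis using 3 by (simp add: algebra_simps)
  qed
qed



lemma card_bound:
  fixes \<phi> :: "'a \<Rightarrow> 'b::finite"
  assumes "inj_on \<phi> A"
  shows "finite A \<and> card A \<le> CARD('b)"
proof
  show fA: "finite A" using assms finite_imageD[of \<phi> A] by (meson finite_subset subset_UNIV finite)
  have "card A = card (\<phi> ` A)" using assms by (simp add: card_image)
  also have "\<dots> \<le> CARD('b)" by (rule card_mono) auto
  finally show "card A \<le> CARD('b)" .
qed

lemma grid_pts:
  assumes "grid_box h1 h2 B"
  shows "on_grid_pt h1 (fst B) \<and> on_grid_pt h1 (fst (snd B)) \<and> on_grid_pt h2 (fst (snd (snd B))) \<and> on_grid_pt h2 (snd (snd (snd B)))"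
  using assms by (cases B) (simp add: grid_box_def)

lemma box_distinct:
  assumes h: "h1 > 0" "h2 > 0" and gi: "grid_box h1 h2 (B i)" and gj: "grid_box h1 h2 (B j)"
    and disj: "disjoint_family_on (\<lambda>i. box_set (B i)) I" and ij: "i \<in> I" "j \<in> I"
    and xi: "inC (B i) x" and xj: "inC (B j) x"
    and s1: "(ereal (fst x) < fst (snd (B i))) = (ereal (fst x) < fst (snd (B j)))"
    and s2: "(ereal (snd x) < snd (snd (snd (B i)))) = (ereal (snd x) < snd (snd (snd (B j))))"
  shows "i = j"
proof (rule ccontr)
  assume ne: "i \<noteq> j"
  have li: "fst (B i) < fst (snd (B i)) \<and> fst (snd (snd (B i))) < snd (snd (snd (B i)))"
    by (rule grid_box_lt[OF h gi])
  have lj: "fst (B j) < fst (snd (B j)) \<and> fst (snd (snd (B j))) < snd (snd (snd (B j)))"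
    by (rule grid_box_lt[OF h gj])
  obtain t1 where t1: "fst (B i) < ereal t1 \<and> ereal t1 < fst (snd (B i)) \<and> fst (B j) < ereal t1 \<and> ereal t1 < fst (snd (B j))"
    using common_pt[of "fst (B i)" "fst (snd (B i))" "fst x" "fst (B j)" "fst (snd (B j))"] li lj xi xj s1
    unfolding inC_def by blast
  obtain t2 where t2: "fst (snd (snd (B i))) < ereal t2 \<and> ereal t2 < snd (snd (snd (B i))) \<and> fst (snd (snd (B j))) < ereal t2 \<and> ereal t2 < snd (snd (snd (B j)))"
    using common_pt[of "fst (snd (snd (B i)))" "snd (snd (snd (B i)))" "snd x" "fst (snd (snd (B j)))" "snd (snd (snd (B j)))"] li lj xi xj s2
    unfolding inC_def by blast
  have "(t1, t2) \<in> box_set (B i)" "(t1, t2) \<in> box_set (B j)"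
    using t1 t2 by (simp_all add: box_set_iff)
  moreover have "box_set (B i) \<inter> box_set (B j) = {}"
    using disj ij ne unfolding disjoint_family_on_def by blast
  ultimately show False by blast
qed



theorem mainTheorem16:
  fixes h1 h2 p :: real and \<Omega> :: ebox and I :: "'i set" and B :: "'i \<Rightarrow> ebox"
    and u :: "real \<times> real \<Rightarrow> real"
  assumes "h1 > 0" and "h2 > 0"
    and "grid_box h1 h2 \<Omega>"
    and "countable I"
    and "\<And>i. i \<in> I \<Longrightarrow> grid_box h1 h2 (B i)"
    and "disjoint_family_on (\<lambda>i. box_set (B i)) I"
    and "closure (box_set \<Omega>) = (\<Union>i\<in>I. closure (box_set (B i)))"
    and "1 \<le> p"
  shows "Lp_pow h1 h2 p \<Omega> u \<le> (\<Sum>\<^sub>\<infinity>i\<in>I. Lp_pow h1 h2 p (B i) u)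
       \<and> (\<Sum>\<^sub>\<infinity>i\<in>I. Lp_pow h1 h2 p (B i) u) \<le> 4 * Lp_pow h1 h2 p \<Omega> u
       \<and> D_sq h1 h2 \<Omega> u \<le> (\<Sum>\<^sub>\<infinity>i\<in>I. D_sq h1 h2 (B i) u)
       \<and> (\<Sum>\<^sub>\<infinity>i\<in>I. D_sq h1 h2 (B i) u) \<le> 2 * D_sq h1 h2 \<Omega> u"
proof -
  note h = assms(1,2)
  note gO = assms(3)
  note gB = assms(5)
  note disj = assms(6)
  have clO: "closure (box_set \<Omega>) = {x. inC \<Omega> x}" by (rule closure_box[OF h gO])
  have clB: "closure (box_set (B i)) = {x. inC (B i) x}" if "i \<in> I" for i
    by (rule closure_box[OF h gB[OF that]])
  have subC: "inC \<Omega> x" if "i \<in> I" "inC (B i) x" for i x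
    using assms(7) clO clB[OF that(1)] that by blast
  have covC: "\<exists>i\<in>I. inC (B i) x" if "inC \<Omega> x" for x
    using assms(7) clO clB that by blast
  have CB: "clos_h h1 h2 (B i) = {x. inC (B i) x} \<inter> grid h1 h2" if "i \<in> I" for i
    using clB[OF that] by (simp add: clos_h_def)
  have CO: "clos_h h1 h2 \<Omega> = {x. inC \<Omega> x} \<inter> grid h1 h2"
    using clO by (simp add: clos_h_def)
  define g where "g x = ennreal (\<bar>u x\<bar> powr p * (h1 * h2))" for x
  have Lp: "Lp_pow h1 h2 p C u = infsum g (clos_h h1 h2 C)" for C
    unfolding Lp_pow_def g_def by simp
  have L1: "Lp_pow h1 h2 p \<Omega> u \<le> (\<Sum>\<^sub>\<infinity>i\<in>I. Lp_pow h1 h2 p (B i) u)"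
    unfolding Lp
  proof (rule cover_le)
    show "clos_h h1 h2 \<Omega> \<subseteq> (\<Union>i\<in>I. clos_h h1 h2 (B i))"
      using covC CB CO by blast
  qed
  have L2: "(\<Sum>\<^sub>\<infinity>i\<in>I. Lp_pow h1 h2 p (B i) u) \<le> of_nat 4 * Lp_pow h1 h2 p \<Omega> u"
    unfolding Lp
  proof (rule mult_le)
    fix i assume "i \<in> I"
    then show "clos_h h1 h2 (B i) \<subseteq> clos_h h1 h2 \<Omega>" using CB CO subC by blast
  next
    fix x assume "x \<in> clos_h h1 h2 \<Omega>"
    let ?A = "{i\<in>I. x \<in> clos_h h1 h2 (B i)}"
    let ?\<phi> = "\<lambda>i. (ereal (fst x) < fst (snd (B i)), ereal (snd x) < snd (snd (snd (B i))))"
    have "inj_on ?\<phi> ?A"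
    proof (rule inj_onI)
      fix i j assume "i \<in> ?A" "j \<in> ?A" "?\<phi> i = ?\<phi> j"
      then show "i = j"
        using box_distinct[OF h gB gB disj, of i j x] CB by auto
    qed
    then have "finite ?A \<and> card ?A \<le> CARD(bool \<times> bool)" by (rule card_bound)
    then show "finite ?A \<and> card ?A \<le> 4" by simp
  qed
  define d1 where "d1 x = ennreal ((D1plus h1 u x)\<^sup>2 * (h1 * h2))" for x
  define d2 where "d2 x = ennreal ((D2plus h2 u x)\<^sup>2 * (h1 * h2))" for x
  define E1 where "E1 C = {x\<in>clos_h h1 h2 C. ereal (fst x) < fst (snd C)}" for C
  define E2 where "E2 C = {x\<in>clos_h h1 h2 C. ereal (snd x) < snd (snd (snd C))}" for C
  have DO: "D_sq h1 h2 \<Omega> u = infsum d1 (E1 \<Omega>) + infsum d2 (E2 \<Omega>)"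
    unfolding D_sq_def d1_def d2_def E1_def E2_def E1_char[OF h gO] E2_char[OF h gO] by simp
  have DB: "D_sq h1 h2 (B i) u = infsum d1 (E1 (B i)) + infsum d2 (E2 (B i))" if "i \<in> I" for i
    unfolding D_sq_def d1_def d2_def E1_def E2_def E1_char[OF h gB[OF that]] E2_char[OF h gB[OF that]] by simp
  have DI: "(\<Sum>\<^sub>\<infinity>i\<in>I. D_sq h1 h2 (B i) u) = (\<Sum>\<^sub>\<infinity>i\<in>I. infsum d1 (E1 (B i))) + (\<Sum>\<^sub>\<infinity>i\<in>I. infsum d2 (E2 (B i)))"
  proof -
    have "(\<Sum>\<^sub>\<infinity>i\<in>I. D_sq h1 h2 (B i) u) = (\<Sum>\<^sub>\<infinity>i\<in>I. infsum d1 (E1 (B i)) + infsum d2 (E2 (B i)))"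
      using DB by (intro infsum_cong) simp
    also have "\<dots> = (\<Sum>\<^sub>\<infinity>i\<in>I. infsum d1 (E1 (B i))) + (\<Sum>\<^sub>\<infinity>i\<in>I. infsum d2 (E2 (B i)))"
      by (rule infsum_add; rule nonneg_summable_on_complete; simp)
    finally show ?thesis .
  qed
  obtain gp: "on_grid_pt h1 (fst \<Omega>)" "on_grid_pt h1 (fst (snd \<Omega>))" "on_grid_pt h2 (fst (snd (snd \<Omega>)))" "on_grid_pt h2 (snd (snd (snd \<Omega>)))"
    using grid_pts[OF gO] by blast
  have gpB: "on_grid_pt h1 (fst (B i)) \<and> on_grid_pt h1 (fst (snd (B i))) \<and> on_grid_pt h2 (fst (snd (snd (B i)))) \<and> on_grid_pt h2 (snd (snd (snd (B i))))"
    if "i \<in> I" for i using grid_pts[OF gB[OF that]] .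
  have cov1: "E1 \<Omega> \<subseteq> (\<Union>i\<in>I. E1 (B i))"
  proof
    fix x assume x: "x \<in> E1 \<Omega>"
    then have xO: "inC \<Omega> x" "x \<in> grid h1 h2" "ereal (fst x) < fst (snd \<Omega>)"
      unfolding E1_def CO by auto
    then obtain z1 z2 where xz: "x = (h1 * of_int z1, h2 * of_int z2)" unfolding grid_def by auto
    define y where "y = (h1 * of_int z1 + h1/2, h2 * of_int z2)"
    have "inC \<Omega> y"
    proof -
      have "fst \<Omega> \<le> ereal (h1 * of_int z1)" using xO(1) xz by (simp add: inC_def)
      also have "\<dots> \<le> ereal (h1 * of_int z1 + h1/2)" using h by simp
      finally have a: "fst \<Omega> \<le> ereal (h1 * of_int z1 + h1/2)" .
      have b: "ereal (h1 * of_int z1 + h1/2) < fst (snd \<Omega>)"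
        using glem2[OF h(1) gp(2)] xO(3) xz by simp
      show ?thesis using a b xO(1) xz unfolding y_def inC_def by simp
    qed
    then obtain i where i: "i \<in> I" "inC (B i) y" using covC by blast
    have "fst (B i) \<le> ereal (h1 * of_int z1)"
      using glem1[OF h(1)] gpB[OF i(1)] i(2) unfolding y_def inC_def by simp
    moreover have "ereal (h1 * of_int z1) < fst (snd (B i))"
    proof -
      have "ereal (h1 * of_int z1) < ereal (h1 * of_int z1 + h1/2)" using h by simp
      also have "\<dots> \<le> fst (snd (B i))" using i(2) unfolding y_def inC_def by simp
      finally show ?thesis .
    qed
    ultimately have "inC (B i) x" "ereal (fst x) < fst (snd (B i))"
      using i(2) xz unfolding y_def inC_def by auto
    then have "x \<in> E1 (B i)" using xO(2) CB[OF i(1)] unfolding E1_def by auto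
    then show "x \<in> (\<Union>i\<in>I. E1 (B i))" using i(1) by blast
  qed
  have cov2: "E2 \<Omega> \<subseteq> (\<Union>i\<in>I. E2 (B i))"
  proof
    fix x assume x: "x \<in> E2 \<Omega>"
    then have xO: "inC \<Omega> x" "x \<in> grid h1 h2" "ereal (snd x) < snd (snd (snd \<Omega>))"
      unfolding E2_def CO by auto
    then obtain z1 z2 where xz: "x = (h1 * of_int z1, h2 * of_int z2)" unfolding grid_def by auto
    define y where "y = (h1 * of_int z1, h2 * of_int z2 + h2/2)"
    have "inC \<Omega> y"
    proof -
      have "fst (snd (snd \<Omega>)) \<le> ereal (h2 * of_int z2)" using xO(1) xz by (simp add: inC_def)
      also have "\<dots> \<le> ereal (h2 * of_int z2 + h2/2)" using h by simp
      finally have a: "fst (snd (snd \<Omega>)) \<le> ereal (h2 * of_int z2 + h2/2)" .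
      have b: "ereal (h2 * of_int z2 + h2/2) < snd (snd (snd \<Omega>))"
        using glem2[OF h(2) gp(4)] xO(3) xz by simp
      show ?thesis using a b xO(1) xz unfolding y_def inC_def by simp
    qed
    then obtain i where i: "i \<in> I" "inC (B i) y" using covC by blast
    have "fst (snd (snd (B i))) \<le> ereal (h2 * of_int z2)"
      using glem1[OF h(2)] gpB[OF i(1)] i(2) unfolding y_def inC_def by simp
    moreover have "ereal (h2 * of_int z2) < snd (snd (snd (B i)))"
    proof -
      have "ereal (h2 * of_int z2) < ereal (h2 * of_int z2 + h2/2)" using h by simp
      also have "\<dots> \<le> snd (snd (snd (B i)))" using i(2) unfolding y_def inC_def by simp
      finally show ?thesis .
    qed
    ultimately have "inC (B i) x" "ereal (snd x) < snd (snd (snd (B i)))"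
      using i(2) xz unfolding y_def inC_def by auto
    then have "x \<in> E2 (B i)" using xO(2) CB[OF i(1)] unfolding E2_def by auto
    then show "x \<in> (\<Union>i\<in>I. E2 (B i))" using i(1) by blast
  qed
  have sub1: "E1 (B i) \<subseteq> E1 \<Omega>" if iI: "i \<in> I" for i
  proof
    fix x assume "x \<in> E1 (B i)"
    then have x: "inC (B i) x" "x \<in> grid h1 h2" "ereal (fst x) < fst (snd (B i))"
      unfolding E1_def CB[OF iI] by auto
    obtain t where t: "ereal (fst x) < ereal t" "ereal t < fst (snd (B i))"
      using ereal_dense2[OF x(3)] by blast
    have "fst (B i) \<le> ereal t" using x(1) t(1) unfolding inC_def by (meson less_imp_le order_trans)
    then have "inC (B i) (t, snd x)" using x(1) t unfolding inC_def by simp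
    then have "inC \<Omega> (t, snd x)" by (rule subC[OF iI])
    then have "ereal t \<le> fst (snd \<Omega>)" unfolding inC_def by simp
    then have "ereal (fst x) < fst (snd \<Omega>)" using t(1) by (meson less_le_trans)
    then show "x \<in> E1 \<Omega>" using subC[OF iI x(1)] x(2) unfolding E1_def CO by simp
  qed
  have sub2: "E2 (B i) \<subseteq> E2 \<Omega>" if iI: "i \<in> I" for i
  proof
    fix x assume "x \<in> E2 (B i)"
    then have x: "inC (B i) x" "x \<in> grid h1 h2" "ereal (snd x) < snd (snd (snd (B i)))"
      unfolding E2_def CB[OF iI] by auto
    obtain t where t: "ereal (snd x) < ereal t" "ereal t < snd (snd (snd (B i)))"
      using ereal_dense2[OF x(3)] by blast
    have "fst (snd (snd (B i))) \<le> ereal t" using x(1) t(1) unfolding inC_def by (meson less_imp_le order_trans)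
    then have "inC (B i) (fst x, t)" using x(1) t unfolding inC_def by simp
    then have "inC \<Omega> (fst x, t)" by (rule subC[OF iI])
    then have "ereal t \<le> snd (snd (snd \<Omega>))" unfolding inC_def by simp
    then have "ereal (snd x) < snd (snd (snd \<Omega>))" using t(1) by (meson less_le_trans)
    then show "x \<in> E2 \<Omega>" using subC[OF iI x(1)] x(2) unfolding E2_def CO by simp
  qed
  have M1: "(\<Sum>\<^sub>\<infinity>i\<in>I. infsum d1 (E1 (B i))) \<le> of_nat 2 * infsum d1 (E1 \<Omega>)"
  proof (rule mult_le)
    fix i assume "i \<in> I" then show "E1 (B i) \<subseteq> E1 \<Omega>" by (rule sub1)
  next
    fix x assume "x \<in> E1 \<Omega>"
    let ?A = "{i\<in>I. x \<in> E1 (B i)}"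
    let ?\<phi> = "\<lambda>i. ereal (snd x) < snd (snd (snd (B i)))"
    have "inj_on ?\<phi> ?A"
    proof (rule inj_onI)
      fix i j assume "i \<in> ?A" "j \<in> ?A" "?\<phi> i = ?\<phi> j"
      then show "i = j"
        using box_distinct[OF h gB gB disj, of i j x] CB unfolding E1_def by auto
    qed
    then have "finite ?A \<and> card ?A \<le> CARD(bool)" by (rule card_bound)
    then show "finite ?A \<and> card ?A \<le> 2" by simp
  qed
  have M2: "(\<Sum>\<^sub>\<infinity>i\<in>I. infsum d2 (E2 (B i))) \<le> of_nat 2 * infsum d2 (E2 \<Omega>)"
  proof (rule mult_le)
    fix i assume "i \<in> I" then show "E2 (B i) \<subseteq> E2 \<Omega>" by (rule sub2)
  next
    fix x assume "x \<in> E2 \<Omega>"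
    let ?A = "{i\<in>I. x \<in> E2 (B i)}"
    let ?\<phi> = "\<lambda>i. ereal (fst x) < fst (snd (B i))"
    have "inj_on ?\<phi> ?A"
    proof (rule inj_onI)
      fix i j assume "i \<in> ?A" "j \<in> ?A" "?\<phi> i = ?\<phi> j"
      then show "i = j"
        using box_distinct[OF h gB gB disj, of i j x] CB unfolding E2_def by auto
    qed
    then have "finite ?A \<and> card ?A \<le> CARD(bool)" by (rule card_bound)
    then show "finite ?A \<and> card ?A \<le> 2" by simp
  qed
  have D1: "D_sq h1 h2 \<Omega> u \<le> (\<Sum>\<^sub>\<infinity>i\<in>I. D_sq h1 h2 (B i) u)"
    unfolding DO DI by (intro add_mono cover_le cov1 cov2)
  have D2: "(\<Sum>\<^sub>\<infinity>i\<in>I. D_sq h1 h2 (B i) u) \<le> 2 * D_sq h1 h2 \<Omega> u"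
  proof -
    have "(\<Sum>\<^sub>\<infinity>i\<in>I. D_sq h1 h2 (B i) u) \<le> of_nat 2 * infsum d1 (E1 \<Omega>) + of_nat 2 * infsum d2 (E2 \<Omega>)"
      unfolding DI by (intro add_mono M1 M2)
    also have "\<dots> = 2 * D_sq h1 h2 \<Omega> u" unfolding DO by (simp add: distrib_left)
    finally show ?thesis .
  qed
  show ?thesis using L1 L2 D1 D2 by simp
qed

end
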